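(* Fix finite nonempty $A$, $\Omega$, a full-support prior $\mu_0$ on $\Omega$, and a finite $M$ with $|M|>\max\{|\Omega|,|A|\}$. There is a set of transparent environments of Lebesgue measure one in $[0,1]^{|A|(|\Omega|+1)}$ such that, for every environment in it, commitment is valuable if and only if committed Sender values randomization.
   Context: An environment $(u_S,u_R)$ with $u_S,u_R:A\times\Omega\to[0,1]$ is transparent if there is $v:A\to[0,1]$ with $u_S(a,\omega)=v(a)$ for all $a,\omega$; the set of transparent environments is identified with $[0,1]^{|A|(|\Omega|+1)}$ (coordinates $v$ and $u_R$). Messaging strategies $\sigma:\Omega\to\Delta M$, action strategies $\rho:M\to\Delta A$, $U_i(\sigma,\rho)=\sum_{\omega,m,a}\mu_0(\omega)\sigma(m|\omega)\rho(a|m)u_i(a,\omega)$. $(\sigma,\rho)$ is S-BR if $\sigma\in\arg\max_{\sigma'}U_S(\sigma',\rho)$ and R-BR if $\rho\in\arg\max_{\rho'}U_R(\sigma,\rho')$. Persuasion payoff: max of $U_S$ over R-BR profiles; cheap-talk payoff: max over profiles that are S-BR and R-BR. Commitment is valuable if persuasion payoff > cheap-talk payoff. $\sigma$ is partitional if for every $\omega$ some $m$ has $\sigma(m|\omega)=1$. Partitional persuasion payoff: max of $U_S$ over R-BR profiles with partitional $\sigma$. Committed Sender values randomization if persuasion payoff > partitional persuasion payoff. *)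

theory Defs
  imports "HOL-Analysis.Analysis"
begin

text \<open>A mixed strategy is a probability vector; messaging strategies sigma :: 'w => 'm => real
  (sigma w m = probability of m in state w), action strategies rho :: 'm => 'a => real.\<close>

definition is_distr :: "('b::finite \<Rightarrow> real) \<Rightarrow> bool" where
  "is_distr p \<longleftrightarrow> (\<forall>x. 0 \<le> p x) \<and> sum p UNIV = 1"

definition msg_strat :: "('w::finite \<Rightarrow> 'm::finite \<Rightarrow> real) \<Rightarrow> bool" where
  "msg_strat \<sigma> \<longleftrightarrow> (\<forall>w. is_distr (\<sigma> w))"

definition act_strat :: "('m::finite \<Rightarrow> 'a::finite \<Rightarrow> real) \<Rightarrow> bool" where
  "act_strat \<rho> \<longleftrightarrow> (\<forall>m. is_distr (\<rho> m))"

definition payoff ::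
  "('w::finite \<Rightarrow> real) \<Rightarrow> ('a::finite \<Rightarrow> 'w \<Rightarrow> real)
     \<Rightarrow> ('w \<Rightarrow> 'm::finite \<Rightarrow> real) \<Rightarrow> ('m \<Rightarrow> 'a \<Rightarrow> real) \<Rightarrow> real" where
  "payoff mu u \<sigma> \<rho> = (\<Sum>w\<in>UNIV. \<Sum>m\<in>UNIV. \<Sum>a\<in>UNIV. mu w * \<sigma> w m * \<rho> m a * u a w)"

definition S_BR ::
  "('w::finite \<Rightarrow> real) \<Rightarrow> ('a::finite \<Rightarrow> 'w \<Rightarrow> real)
     \<Rightarrow> ('w \<Rightarrow> 'm::finite \<Rightarrow> real) \<Rightarrow> ('m \<Rightarrow> 'a \<Rightarrow> real) \<Rightarrow> bool" where
  "S_BR mu uS \<sigma> \<rho> \<longleftrightarrow> (\<forall>\<sigma>'. msg_strat \<sigma>' \<longrightarrow> payoff mu uS \<sigma>' \<rho> \<le> payoff mu uS \<sigma> \<rho>)"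

definition R_BR ::
  "('w::finite \<Rightarrow> real) \<Rightarrow> ('a::finite \<Rightarrow> 'w \<Rightarrow> real)
     \<Rightarrow> ('w \<Rightarrow> 'm::finite \<Rightarrow> real) \<Rightarrow> ('m \<Rightarrow> 'a \<Rightarrow> real) \<Rightarrow> bool" where
  "R_BR mu uR \<sigma> \<rho> \<longleftrightarrow> (\<forall>\<rho>'. act_strat \<rho>' \<longrightarrow> payoff mu uR \<sigma> \<rho>' \<le> payoff mu uR \<sigma> \<rho>)"

definition partitional :: "('w::finite \<Rightarrow> 'm::finite \<Rightarrow> real) \<Rightarrow> bool" where
  "partitional \<sigma> \<longleftrightarrow> (\<forall>w. \<exists>m. \<sigma> w m = 1)"

text \<open>The payoffs below are maxima; we write them as suprema (the sets are nonempty,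
  bounded and the maxima are attained).\<close>

definition persuasion_payoff ::
  "('w::finite \<Rightarrow> real) \<Rightarrow> ('a::finite \<Rightarrow> 'w \<Rightarrow> real) \<Rightarrow> ('a \<Rightarrow> 'w \<Rightarrow> real)
     \<Rightarrow> 'm::finite itself \<Rightarrow> real" where
  "persuasion_payoff mu uS uR (_::'m itself) =
     Sup {payoff mu uS \<sigma> \<rho> | (\<sigma> :: 'w \<Rightarrow> 'm \<Rightarrow> real) \<rho>.
            msg_strat \<sigma> \<and> act_strat \<rho> \<and> R_BR mu uR \<sigma> \<rho>}"

definition cheap_talk_payoff ::
  "('w::finite \<Rightarrow> real) \<Rightarrow> ('a::finite \<Rightarrow> 'w \<Rightarrow> real) \<Rightarrow> ('a \<Rightarrow> 'w \<Rightarrow> real)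
     \<Rightarrow> 'm::finite itself \<Rightarrow> real" where
  "cheap_talk_payoff mu uS uR (_::'m itself) =
     Sup {payoff mu uS \<sigma> \<rho> | (\<sigma> :: 'w \<Rightarrow> 'm \<Rightarrow> real) \<rho>.
            msg_strat \<sigma> \<and> act_strat \<rho> \<and> S_BR mu uS \<sigma> \<rho> \<and> R_BR mu uR \<sigma> \<rho>}"

definition partitional_persuasion_payoff ::
  "('w::finite \<Rightarrow> real) \<Rightarrow> ('a::finite \<Rightarrow> 'w \<Rightarrow> real) \<Rightarrow> ('a \<Rightarrow> 'w \<Rightarrow> real)
     \<Rightarrow> 'm::finite itself \<Rightarrow> real" where
  "partitional_persuasion_payoff mu uS uR (_::'m itself) =
     Sup {payoff mu uS \<sigma> \<rho> | (\<sigma> :: 'w \<Rightarrow> 'm \<Rightarrow> real) \<rho>.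
            msg_strat \<sigma> \<and> partitional \<sigma> \<and> act_strat \<rho> \<and> R_BR mu uR \<sigma> \<rho>}"

definition commitment_valuable where
  "commitment_valuable mu uS uR M \<longleftrightarrow>
     persuasion_payoff mu uS uR M > cheap_talk_payoff mu uS uR M"

definition values_randomization where
  "values_randomization mu uS uR M \<longleftrightarrow>
     persuasion_payoff mu uS uR M > partitional_persuasion_payoff mu uS uR M"

text \<open>Transparent environments as points of [0,1]^(|A|(|Omega|+1)):
  coordinates indexed by 'a + ('a \<times> 'w); Inl a gives v(a), Inr (a,w) gives u_R(a,w).\<close>

definition env_uS :: "real ^ ('a::finite + ('a \<times> 'w::finite)) \<Rightarrow> 'a \<Rightarrow> 'w \<Rightarrow> real" where
  "env_uS e a w = e $ Inl a"

definition env_uR :: "real ^ ('a::finite + ('a \<times> 'w::finite)) \<Rightarrow> 'a \<Rightarrow> 'w \<Rightarrow> real" where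
  "env_uR e a w = e $ Inr (a, w)"

definition unit_cube :: "(real ^ 'n::finite) set" where
  "unit_cube = {x. \<forall>i. 0 \<le> x $ i \<and> x $ i \<le> 1}"

end

theory Submission
  imports Defs
begin


definition gR :: "('w::finite \<Rightarrow> real) \<Rightarrow> ('a::finite \<Rightarrow> 'w \<Rightarrow> real) \<Rightarrow> ('w \<Rightarrow> 'm::finite \<Rightarrow> real) \<Rightarrow> 'm \<Rightarrow> 'a \<Rightarrow> real" where
  "gR mu u \<sigma> m a = (\<Sum>w\<in>UNIV. mu w * \<sigma> w m * u a w)"

definition pim :: "('w::finite \<Rightarrow> real) \<Rightarrow> ('w \<Rightarrow> 'm::finite \<Rightarrow> real) \<Rightarrow> 'm \<Rightarrow> real" where
  "pim mu \<sigma> m = (\<Sum>w\<in>UNIV. mu w * \<sigma> w m)"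

definition Vv :: "('a::finite \<Rightarrow> real) \<Rightarrow> ('m::finite \<Rightarrow> 'a \<Rightarrow> real) \<Rightarrow> 'm \<Rightarrow> real" where
  "Vv v \<rho> m = (\<Sum>a\<in>UNIV. \<rho> m a * v a)"

lemma payoff_g: "payoff mu u \<sigma> \<rho> = (\<Sum>m\<in>UNIV. \<Sum>a\<in>UNIV. \<rho> m a * gR mu u \<sigma> m a)"
proof -
  have "(\<Sum>m\<in>UNIV. \<Sum>a\<in>UNIV. \<rho> m a * gR mu u \<sigma> m a)
      = (\<Sum>m\<in>UNIV. \<Sum>a\<in>UNIV. \<Sum>w\<in>UNIV. mu w * \<sigma> w m * \<rho> m a * u a w)"
    by (simp add: gR_def sum_distrib_left mult_ac)
  also have "\<dots> = (\<Sum>m\<in>UNIV. \<Sum>w\<in>UNIV. \<Sum>a\<in>UNIV. mu w * \<sigma> w m * \<rho> m a * u a w)"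
    by (rule sum.cong[OF refl], rule sum.swap)
  also have "\<dots> = payoff mu u \<sigma> \<rho>"
    unfolding payoff_def by (rule sum.swap)
  finally show ?thesis by simp
qed

lemma payoff_T1: "payoff mu (\<lambda>a w. v a) \<sigma> \<rho> = (\<Sum>w\<in>UNIV. mu w * (\<Sum>m\<in>UNIV. \<sigma> w m * Vv v \<rho> m))"
  by (simp add: payoff_def Vv_def sum_distrib_left mult_ac)

lemma payoff_T2: "payoff mu (\<lambda>a w. v a) \<sigma> \<rho> = (\<Sum>m\<in>UNIV. pim mu \<sigma> m * Vv v \<rho> m)"
proof -
  have "payoff mu (\<lambda>a w. v a) \<sigma> \<rho> = (\<Sum>w\<in>UNIV. \<Sum>m\<in>UNIV. mu w * \<sigma> w m * Vv v \<rho> m)"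
    by (simp add: payoff_T1 sum_distrib_left mult_ac)
  also have "\<dots> = (\<Sum>m\<in>UNIV. \<Sum>w\<in>UNIV. mu w * \<sigma> w m * Vv v \<rho> m)" by (rule sum.swap)
  also have "\<dots> = (\<Sum>m\<in>UNIV. pim mu \<sigma> m * Vv v \<rho> m)"
    by (simp add: pim_def sum_distrib_right)
  finally show ?thesis .
qed

lemma D1: assumes "is_distr p" "\<And>x. p x > 0 \<Longrightarrow> f x \<le> B"
  shows "(\<Sum>x\<in>UNIV. p x * f x) \<le> B"
proof -
  have "(\<Sum>x\<in>UNIV. p x * f x) \<le> (\<Sum>x\<in>UNIV. p x * B)"
  proof (rule sum_mono)
    fix x
    show "p x * f x \<le> p x * B"
    proof (cases "p x > 0")
      case True then show ?thesis using assms(2) by simp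
    next
      case False
      have "0 \<le> p x" using assms(1) unfolding is_distr_def by auto
      with False have "p x = 0" by linarith
      then show ?thesis by simp
    qed
  qed
  also have "\<dots> = B" using assms(1) unfolding is_distr_def by (simp add: sum_distrib_right[symmetric])
  finally show ?thesis .
qed

lemma D1': assumes "is_distr p" "\<And>x. p x > 0 \<Longrightarrow> B \<le> f x"
  shows "B \<le> (\<Sum>x\<in>UNIV. p x * f x)"
proof -
  have "(\<Sum>x\<in>UNIV. p x * (- f x)) \<le> - B" using D1[of p "\<lambda>x. - f x" "-B"] assms by force
  then show ?thesis by (simp add: sum_negf)
qed

lemma D2: assumes "is_distr p" "\<And>x. f x \<le> B" "p x0 > 0" "f x0 < B"
  shows "(\<Sum>x\<in>UNIV. p x * f x) < B"
proof -
  have "(\<Sum>x\<in>UNIV. p x * f x) < (\<Sum>x\<in>UNIV. p x * B)"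
  proof (rule sum_strict_mono_ex1)
    show "\<forall>x\<in>UNIV. p x * f x \<le> p x * B" using assms(1,2) unfolding is_distr_def
      by (simp add: mult_left_mono)
    show "\<exists>x\<in>UNIV. p x * f x < p x * B" using assms(3,4) by (metis UNIV_I mult_strict_left_mono)
  qed simp
  also have "\<dots> = B" using assms(1) unfolding is_distr_def by (simp add: sum_distrib_right[symmetric])
  finally show ?thesis .
qed

lemma D_eq: assumes "is_distr p" "\<And>x. p x > 0 \<Longrightarrow> f x = B"
  shows "(\<Sum>x\<in>UNIV. p x * f x) = B"
  using D1[of p f B] D1'[of p B f] assms by force

lemma pure_sum: "(\<Sum>x\<in>UNIV. (if x = (y::'b::finite) then 1 else 0) * (f x :: real)) = f y"
proof -
  have "(\<Sum>x\<in>UNIV. (if x = y then 1 else 0) * (f x :: real)) = (\<Sum>x\<in>UNIV. if x = y then f x else 0)"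
    by (rule sum.cong) auto
  then show ?thesis by simp
qed

lemma pure_distr: "is_distr (\<lambda>x::'b::finite. if x = y then 1 else (0::real))"
  unfolding is_distr_def by simp

lemma ex_max: "\<exists>x::'b::finite. \<forall>y. (f y::real) \<le> f x"
proof -
  have "Max (range f) \<in> range f" by (rule Max_in) auto
  then obtain x where "f x = Max (range f)" by (metis rangeE)
  moreover have "\<forall>y. f y \<le> Max (range f)" by (auto intro: Max_ge)
  ultimately show ?thesis by metis
qed

lemma ex_max_on: "finite S \<Longrightarrow> S \<noteq> {} \<Longrightarrow> \<exists>x\<in>S. \<forall>y\<in>S. (f y::real) \<le> f x"
proof -
  assume S: "finite S" "S \<noteq> {}"
  have "Max (f ` S) \<in> f ` S" using S by (intro Max_in) auto
  then obtain x where "x \<in> S" "f x = Max (f ` S)" by auto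
  then show ?thesis using S by (metis Max_ge finite_imageI imageI)
qed

lemma ex_min_on: "finite S \<Longrightarrow> S \<noteq> {} \<Longrightarrow> \<exists>x\<in>S. \<forall>y\<in>S. f x \<le> (f y::real)"
  using ex_max_on[of S "\<lambda>x. - f x"] by auto

lemma RB_pure:
  fixes \<sigma> :: "'w::finite \<Rightarrow> 'm::finite \<Rightarrow> real" and uR :: "'a::finite \<Rightarrow> 'w \<Rightarrow> real"
  assumes "\<And>m b. gR mu uR \<sigma> m b \<le> gR mu uR \<sigma> m (am m)"
  shows "R_BR mu uR \<sigma> (\<lambda>m a. if a = am m then 1 else 0)"
  unfolding R_BR_def
proof (intro allI impI)
  fix \<rho>' :: "'m \<Rightarrow> 'a \<Rightarrow> real" assume "act_strat \<rho>'"
  have "payoff mu uR \<sigma> \<rho>' = (\<Sum>m\<in>UNIV. \<Sum>a\<in>UNIV. \<rho>' m a * gR mu uR \<sigma> m a)" by (rule payoff_g)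
  also have "\<dots> \<le> (\<Sum>m\<in>UNIV. gR mu uR \<sigma> m (am m))"
    by (rule sum_mono, rule D1) (use \<open>act_strat \<rho>'\<close> assms in \<open>auto simp: act_strat_def\<close>)
  also have "\<dots> = payoff mu uR \<sigma> (\<lambda>m a. if a = am m then 1 else 0)"
    by (simp add: payoff_g pure_sum)
  finally show "payoff mu uR \<sigma> \<rho>' \<le> payoff mu uR \<sigma> (\<lambda>m a. if a = am m then 1 else 0)" .
qed

lemma RB_supp:
  assumes R: "R_BR mu uR \<sigma> \<rho>" and act: "act_strat \<rho>" and pos: "\<rho> m a > 0"
  shows "gR mu uR \<sigma> m b \<le> gR mu uR \<sigma> m a"
proof (rule ccontr)
  assume "\<not> ?thesis"
  then have lt: "gR mu uR \<sigma> m a < gR mu uR \<sigma> m b" by simp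
  let ?g = "gR mu uR \<sigma>"
  obtain bx where bx: "\<forall>y. ?g m y \<le> ?g m bx" using ex_max[of "?g m"] by blast
  define \<rho>' where "\<rho>' = (\<lambda>m' a'. if m' = m then (if a' = bx then 1 else 0) else \<rho> m' a')"
  have act': "act_strat \<rho>'" unfolding act_strat_def
  proof
    fix m' show "is_distr (\<rho>' m')"
    proof (cases "m' = m")
      case True then show ?thesis using pure_distr[of bx] by (simp add: \<rho>'_def)
    next
      case False then show ?thesis using act by (simp add: \<rho>'_def act_strat_def)
    qed
  qed
  have strict: "(\<Sum>a'\<in>UNIV. \<rho> m a' * ?g m a') < ?g m bx"
  proof (rule D2[of _ _ _ a])
    show "?g m a < ?g m bx" using lt bx by (meson less_le_trans)
  qed (use act bx pos in \<open>auto simp: act_strat_def\<close>)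
  have "payoff mu uR \<sigma> \<rho>' - payoff mu uR \<sigma> \<rho>
      = (\<Sum>m'\<in>UNIV. (\<Sum>a'\<in>UNIV. \<rho>' m' a' * ?g m' a') - (\<Sum>a'\<in>UNIV. \<rho> m' a' * ?g m' a'))"
    by (simp add: payoff_g sum_subtractf)
  also have "\<dots> = (\<Sum>m'\<in>UNIV. if m' = m then ?g m bx - (\<Sum>a'\<in>UNIV. \<rho> m a' * ?g m a') else 0)"
    by (rule sum.cong) (simp_all add: \<rho>'_def pure_sum)
  also have "\<dots> = ?g m bx - (\<Sum>a'\<in>UNIV. \<rho> m a' * ?g m a')" by simp
  finally have "payoff mu uR \<sigma> \<rho>' > payoff mu uR \<sigma> \<rho>" using strict by simp
  moreover have "payoff mu uR \<sigma> \<rho>' \<le> payoff mu uR \<sigma> \<rho>"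
    using R[unfolded R_BR_def, rule_format, OF act'] .
  ultimately show False by linarith
qed



lemma SB_used:
  fixes \<sigma> :: "'w::finite \<Rightarrow> 'm::finite \<Rightarrow> real" and \<rho> :: "'m \<Rightarrow> 'a::finite \<Rightarrow> real"
  assumes mu: "is_distr mu" and pos: "\<forall>w. mu w > 0" and ms: "msg_strat \<sigma>"
    and S: "S_BR mu (\<lambda>a w. v a) \<sigma> \<rho>" and sp: "\<sigma> w m > 0"
  shows "Vv v \<rho> m = payoff mu (\<lambda>a w. v a) \<sigma> \<rho>"
proof -
  obtain mx where mx: "\<forall>m'. Vv v \<rho> m' \<le> Vv v \<rho> mx" using ex_max[of "Vv v \<rho>"] by blast
  define \<sigma>' :: "'w \<Rightarrow> 'm \<Rightarrow> real" where "\<sigma>' = (\<lambda>w m. if m = mx then 1 else 0)"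
  have ms': "msg_strat \<sigma>'" unfolding msg_strat_def \<sigma>'_def using pure_distr by auto
  have p': "payoff mu (\<lambda>a w. v a) \<sigma>' \<rho> = Vv v \<rho> mx"
    unfolding payoff_T1 \<sigma>'_def pure_sum using D_eq[OF mu, of "\<lambda>w. Vv v \<rho> mx"] by simp
  have le: "Vv v \<rho> mx \<le> payoff mu (\<lambda>a w. v a) \<sigma> \<rho>"
    using S[unfolded S_BR_def, rule_format, OF ms'] p' by simp
  have each: "(\<Sum>m'\<in>UNIV. \<sigma> w' m' * Vv v \<rho> m') \<le> Vv v \<rho> mx" for w'
  proof (rule D1)
    show "is_distr (\<sigma> w')" using ms unfolding msg_strat_def by simp
    show "\<And>x. \<sigma> w' x > 0 \<Longrightarrow> Vv v \<rho> x \<le> Vv v \<rho> mx" using mx by simp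
  qed
  have up: "payoff mu (\<lambda>a w. v a) \<sigma> \<rho> \<le> Vv v \<rho> mx"
    unfolding payoff_T1 by (rule D1[OF mu], rule each)
  have "Vv v \<rho> m = Vv v \<rho> mx"
  proof (rule ccontr)
    assume "Vv v \<rho> m \<noteq> Vv v \<rho> mx"
    then have lt: "Vv v \<rho> m < Vv v \<rho> mx" using mx by (meson less_le)
    have strict: "(\<Sum>m'\<in>UNIV. \<sigma> w m' * Vv v \<rho> m') < Vv v \<rho> mx"
    proof (rule D2[of "\<sigma> w" "Vv v \<rho>" "Vv v \<rho> mx" m])
      show "Vv v \<rho> m < Vv v \<rho> mx" by (rule lt)
      show "is_distr (\<sigma> w)" using ms unfolding msg_strat_def by simp
      show "\<And>x. Vv v \<rho> x \<le> Vv v \<rho> mx" using mx by simp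
      show "\<sigma> w m > 0" by (rule sp)
    qed
    have "payoff mu (\<lambda>a w. v a) \<sigma> \<rho> < Vv v \<rho> mx"
      unfolding payoff_T1
    proof (rule D2[of _ _ _ w])
      show "is_distr mu" by (rule mu)
      show "\<And>x. (\<Sum>m'\<in>UNIV. \<sigma> x m' * Vv v \<rho> m') \<le> Vv v \<rho> mx" by (rule each)
      show "mu w > 0" using pos by simp
      show "(\<Sum>m'\<in>UNIV. \<sigma> w m' * Vv v \<rho> m') < Vv v \<rho> mx" by (rule strict)
    qed
    then show False using le by linarith
  qed
  then show ?thesis using le up by linarith
qed

lemma SB_const:
  fixes \<sigma> :: "'w::finite \<Rightarrow> 'm::finite \<Rightarrow> real" and \<rho> :: "'m \<Rightarrow> 'a::finite \<Rightarrow> real"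
  assumes mu: "is_distr mu" and ms: "msg_strat \<sigma>" and c: "\<And>m. Vv v \<rho> m = c"
  shows "S_BR mu (\<lambda>a w. v a) \<sigma> \<rho> \<and> payoff mu (\<lambda>a w. v a) \<sigma> \<rho> = c"
proof -
  have pc: "payoff mu (\<lambda>a w. v a) \<sigma>' \<rho> = c" if "msg_strat \<sigma>'" for \<sigma>' :: "'w \<Rightarrow> 'm \<Rightarrow> real"
  proof -
    have "(\<Sum>m\<in>UNIV. \<sigma>' w m * Vv v \<rho> m) = c" for w
      by (rule D_eq) (use that c in \<open>simp_all add: msg_strat_def\<close>)
    then show ?thesis unfolding payoff_T1 using D_eq[OF mu, of "\<lambda>w. c"] by simp
  qed
  show ?thesis unfolding S_BR_def using pc ms by simp
qed

lemma Vv_pure: "Vv v (\<lambda>m a. if a = am m then 1 else 0) m = v (am m)"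
  unfolding Vv_def by (rule pure_sum)

lemma payoff_le1:
  fixes \<sigma> :: "'w::finite \<Rightarrow> 'm::finite \<Rightarrow> real" and \<rho> :: "'m \<Rightarrow> 'a::finite \<Rightarrow> real"
  assumes mu: "is_distr mu" and ms: "msg_strat \<sigma>" and act: "act_strat \<rho>" and v1: "\<forall>a. v a \<le> 1"
  shows "payoff mu (\<lambda>a w. v a) \<sigma> \<rho> \<le> 1"
proof -
  have V1: "Vv v \<rho> m \<le> 1" for m unfolding Vv_def
    by (rule D1) (use act v1 in \<open>simp_all add: act_strat_def\<close>)
  have "(\<Sum>m\<in>UNIV. \<sigma> w m * Vv v \<rho> m) \<le> 1" for w
    by (rule D1) (use ms V1 in \<open>simp_all add: msg_strat_def\<close>)
  then show ?thesis unfolding payoff_T1 by (rule D1[OF mu])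
qed

lemma sum_pim: assumes mu: "is_distr mu" and ms: "msg_strat \<sigma>"
  shows "(\<Sum>m\<in>UNIV. pim mu \<sigma> m) = 1"
proof -
  have "(\<Sum>m\<in>UNIV. pim mu \<sigma> m) = (\<Sum>w\<in>UNIV. \<Sum>m\<in>UNIV. mu w * \<sigma> w m)"
    unfolding pim_def by (rule sum.swap)
  also have "\<dots> = (\<Sum>w\<in>UNIV. mu w)"
    using ms unfolding msg_strat_def is_distr_def by (simp add: sum_distrib_left[symmetric])
  also have "\<dots> = 1" using mu unfolding is_distr_def by simp
  finally show ?thesis .
qed

lemma pim_nonneg: assumes mu: "is_distr mu" and ms: "msg_strat \<sigma>"
  shows "pim mu \<sigma> m \<ge> 0"
  using mu ms unfolding pim_def msg_strat_def is_distr_def by (simp add: sum_nonneg)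

lemma pim_pos: assumes mu: "is_distr mu" and pos: "\<forall>w. mu w > 0" and ms: "msg_strat \<sigma>"
  shows "pim mu \<sigma> m > 0 \<longleftrightarrow> (\<exists>w. \<sigma> w m > 0)"
proof
  assume a: "pim mu \<sigma> m > 0"
  show "\<exists>w. \<sigma> w m > 0"
  proof (rule ccontr)
    assume n: "\<not> (\<exists>w. \<sigma> w m > 0)"
    have "\<sigma> w m = 0" for w
    proof -
      have "\<sigma> w m \<ge> 0" using ms unfolding msg_strat_def is_distr_def by simp
      moreover have "\<not> \<sigma> w m > 0" using n by blast
      ultimately show ?thesis by linarith
    qed
    then have "pim mu \<sigma> m = 0" unfolding pim_def by simp
    then show False using a by simp
  qed
next
  assume "\<exists>w. \<sigma> w m > 0"
  then obtain w where w: "\<sigma> w m > 0" by blast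
  have "0 < mu w * \<sigma> w m" using w pos by simp
  also have "\<dots> \<le> pim mu \<sigma> m" unfolding pim_def
    by (rule member_le_sum) (use mu ms in \<open>auto simp: msg_strat_def is_distr_def\<close>)
  finally show "pim mu \<sigma> m > 0" .
qed

lemma pim_le1: assumes mu: "is_distr mu" and ms: "msg_strat \<sigma>"
  shows "pim mu \<sigma> m \<le> 1"
proof -
  have "pim mu \<sigma> m \<le> (\<Sum>m\<in>UNIV. pim mu \<sigma> m)"
    by (rule member_le_sum) (use pim_nonneg[OF mu ms] in auto)
  then show ?thesis using sum_pim[OF mu ms] by simp
qed

lemma g_diff:
  assumes mu: "is_distr mu" and ms: "msg_strat \<sigma>" and u01: "\<forall>a w. 0 \<le> uR a w \<and> uR a w \<le> 1"
  shows "gR mu uR \<sigma> m a - gR mu uR \<sigma> m b \<ge> - pim mu \<sigma> m"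
proof -
  have "gR mu uR \<sigma> m a - gR mu uR \<sigma> m b = (\<Sum>w\<in>UNIV. mu w * \<sigma> w m * (uR a w - uR b w))"
    unfolding gR_def by (simp add: sum_subtractf algebra_simps)
  also have "\<dots> \<ge> (\<Sum>w\<in>UNIV. mu w * \<sigma> w m * (-1))"
  proof (rule sum_mono)
    fix w
    have "mu w * \<sigma> w m \<ge> 0" using mu ms unfolding msg_strat_def is_distr_def by simp
    moreover have "uR a w - uR b w \<ge> -1" using u01 by (smt (verit))
    ultimately show "mu w * \<sigma> w m * (-1) \<le> mu w * \<sigma> w m * (uR a w - uR b w)"
      by (metis mult_left_mono)
  qed
  finally show ?thesis unfolding pim_def by (simp add: sum_negf)
qed

lemma U_sum:
  assumes ms: "msg_strat \<sigma>"
  shows "(\<Sum>m\<in>UNIV. gR mu uR \<sigma> m a) = (\<Sum>w\<in>UNIV. mu w * uR a w)"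
proof -
  have "(\<Sum>m\<in>UNIV. gR mu uR \<sigma> m a) = (\<Sum>w\<in>UNIV. \<Sum>m\<in>UNIV. mu w * \<sigma> w m * uR a w)"
    unfolding gR_def by (rule sum.swap)
  also have "\<dots> = (\<Sum>w\<in>UNIV. mu w * uR a w * (\<Sum>m\<in>UNIV. \<sigma> w m))"
    by (simp add: sum_distrib_left mult_ac)
  also have "\<dots> = (\<Sum>w\<in>UNIV. mu w * uR a w)"
    using ms unfolding msg_strat_def is_distr_def by simp
  finally show ?thesis .
qed

lemma babble:
  fixes m0 :: "'m::finite" and uR :: "'a::finite \<Rightarrow> 'w::finite \<Rightarrow> real"
  assumes mu: "is_distr mu" and a0: "\<forall>b. (\<Sum>w\<in>UNIV. mu w * uR b w) \<le> (\<Sum>w\<in>UNIV. mu w * uR a0 w)"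
  defines "\<sigma>0 \<equiv> (\<lambda>(w::'w) m. if m = m0 then 1 else (0::real))"
    and "\<rho>0 \<equiv> (\<lambda>(m::'m) a. if a = a0 then 1 else (0::real))"
  shows "msg_strat \<sigma>0 \<and> partitional \<sigma>0 \<and> act_strat \<rho>0 \<and> R_BR mu uR \<sigma>0 \<rho>0
     \<and> S_BR mu (\<lambda>a w. v a) \<sigma>0 \<rho>0 \<and> payoff mu (\<lambda>a w. v a) \<sigma>0 \<rho>0 = v a0"
proof -
  have ms: "msg_strat \<sigma>0" unfolding msg_strat_def \<sigma>0_def using pure_distr by auto
  have act: "act_strat \<rho>0" unfolding act_strat_def \<rho>0_def using pure_distr by auto
  have part: "partitional \<sigma>0" unfolding partitional_def \<sigma>0_def by auto
  have g: "gR mu uR \<sigma>0 m b = (if m = m0 then (\<Sum>w\<in>UNIV. mu w * uR b w) else 0)" for m b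
    unfolding gR_def \<sigma>0_def by simp
  have R: "R_BR mu uR \<sigma>0 \<rho>0" unfolding \<rho>0_def
    by (rule RB_pure) (use a0 in \<open>simp add: g\<close>)
  have Vc: "\<And>m. Vv v \<rho>0 m = v a0" unfolding \<rho>0_def Vv_def by (rule pure_sum)
  have SB: "S_BR mu (\<lambda>a w. v a) \<sigma>0 \<rho>0 \<and> payoff mu (\<lambda>a w. v a) \<sigma>0 \<rho>0 = v a0"
    by (rule SB_const[OF mu ms Vc])
  show ?thesis by (intro conjI ms act part R SB[THEN conjunct1] SB[THEN conjunct2])
qed

lemma part_pure:
  assumes ms: "msg_strat \<sigma>" and p: "partitional \<sigma>"
  shows "\<sigma> w m = (if m = (SOME m. \<sigma> w m = 1) then 1 else 0)"
proof -
  define f where "f = (SOME m. \<sigma> w m = 1)"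
  have ex: "\<exists>m. \<sigma> w m = 1" using p unfolding partitional_def by blast
  have f1: "\<sigma> w f = 1" unfolding f_def by (rule someI_ex[OF ex])
  have d: "is_distr (\<sigma> w)" using ms unfolding msg_strat_def by simp
  have nn: "\<forall>m'. \<sigma> w m' \<ge> 0" and s1: "sum (\<sigma> w) UNIV = 1" using d unfolding is_distr_def by auto
  have "sum (\<sigma> w) UNIV = \<sigma> w f + sum (\<sigma> w) (UNIV - {f})"
    by (rule sum.remove) auto
  then have s0: "sum (\<sigma> w) (UNIV - {f}) = 0" using s1 f1 by simp
  have z: "\<sigma> w m = 0" if "m \<noteq> f"
  proof -
    have "\<forall>m'\<in>UNIV - {f}. \<sigma> w m' = 0"
      using sum_nonneg_eq_0_iff[of "UNIV - {f}" "\<sigma> w"] s0 nn by simp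
    then show ?thesis using that by simp
  qed
  show ?thesis
  proof (cases "m = f")
    case True then show ?thesis using f1 f_def by simp
  next
    case False then show ?thesis using z f_def by simp
  qed
qed



lemma best_resp:
  fixes g :: "'m::finite \<Rightarrow> 'a::finite \<Rightarrow> real" and v :: "'a \<Rightarrow> real"
  shows "\<exists>am. \<forall>m. (\<forall>b. g m b \<le> g m (am m)) \<and> (\<forall>a. (\<forall>b. g m b \<le> g m a) \<longrightarrow> v a \<le> v (am m))"
proof -
  have ex: "\<forall>m. \<exists>x. (\<forall>b. g m b \<le> g m x) \<and> (\<forall>a. (\<forall>b. g m b \<le> g m a) \<longrightarrow> v a \<le> v x)"
  proof
    fix m
    have fin: "finite {a. \<forall>b. g m b \<le> g m a}" by simp
    have ne: "{a. \<forall>b. g m b \<le> g m a} \<noteq> {}" using ex_max[of "g m"] by blast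
    obtain x where "x \<in> {a. \<forall>b. g m b \<le> g m a}" "\<forall>y\<in>{a. \<forall>b. g m b \<le> g m a}. v y \<le> v x"
      using ex_max_on[OF fin ne, of v] by blast
    then show "\<exists>x. (\<forall>b. g m b \<le> g m x) \<and> (\<forall>a. (\<forall>b. g m b \<le> g m a) \<longrightarrow> v a \<le> v x)" by blast
  qed
  show ?thesis by (rule choice[OF ex])
qed

lemma V_le_best:
  assumes R: "R_BR mu uR \<sigma> \<rho>" and act: "act_strat \<rho>"
    and am: "\<forall>a. (\<forall>b. gR mu uR \<sigma> m b \<le> gR mu uR \<sigma> m a) \<longrightarrow> v a \<le> v (am m)"
  shows "Vv v \<rho> m \<le> v (am m)"
  unfolding Vv_def
proof (rule D1)
  show "is_distr (\<rho> m)" using act unfolding act_strat_def by simp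
  fix a assume "\<rho> m a > 0"
  then have "\<forall>b. gR mu uR \<sigma> m b \<le> gR mu uR \<sigma> m a" using RB_supp[OF R act] by blast
  then show "v a \<le> v (am m)" using am by blast
qed

lemma pure_act: "act_strat (\<lambda>m a. if a = am m then 1 else (0::real))"
  unfolding act_strat_def using pure_distr by auto

definition Dv :: "('a::finite \<Rightarrow> real) \<Rightarrow> real" where
  "Dv v = Min (insert 1 ((\<lambda>p. \<bar>v (fst p) - v (snd p)\<bar>) ` {p. fst p \<noteq> snd p}))"

definition Uf :: "('w::finite \<Rightarrow> real) \<Rightarrow> ('a \<Rightarrow> 'w \<Rightarrow> real) \<Rightarrow> 'a \<Rightarrow> real" where
  "Uf mu uR b = (\<Sum>w\<in>UNIV. mu w * uR b w)"

definition gam :: "('w::finite \<Rightarrow> real) \<Rightarrow> ('a::finite \<Rightarrow> 'w \<Rightarrow> real) \<Rightarrow> real" where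
  "gam mu uR = Min (insert 1 ((\<lambda>p. Uf mu uR (snd p) - Uf mu uR (fst p)) ` {p. Uf mu uR (fst p) < Uf mu uR (snd p)}))"

definition bet :: "('w::finite \<Rightarrow> real) \<Rightarrow> ('a::finite \<Rightarrow> 'w \<Rightarrow> real) \<Rightarrow> real" where
  "bet mu uR = Min (insert 1 ((\<lambda>q. \<bar>\<Sum>w\<in>fst q. mu w * (uR (fst (snd q)) w - uR (snd (snd q)) w)\<bar>)
      ` {q. fst q \<noteq> {} \<and> fst (snd q) \<noteq> snd (snd q)}))"

definition mumin :: "('w::finite \<Rightarrow> real) \<Rightarrow> real" where
  "mumin mu = Min (range mu)"

lemma Min_ins_pos: "finite S \<Longrightarrow> (\<forall>x\<in>S. x > 0) \<Longrightarrow> Min (insert 1 S) > (0::real)"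
  by (subst Min_gr_iff) auto

lemma Min_ins_le: "finite S \<Longrightarrow> x \<in> S \<Longrightarrow> Min (insert 1 S) \<le> (x::real)"
  by (rule Min_le) auto

lemma Dv_pos: "inj v \<Longrightarrow> Dv v > 0"
  unfolding Dv_def by (rule Min_ins_pos) (auto simp: inj_eq)

lemma Dv_le: "a \<noteq> b \<Longrightarrow> Dv v \<le> \<bar>v a - v b\<bar>"
  unfolding Dv_def by (rule Min_ins_le) (auto intro: image_eqI[where x="(a,b)"])

lemma gam_pos: "gam mu uR > 0"
  unfolding gam_def by (rule Min_ins_pos) auto

lemma gam_le: "Uf mu uR a < Uf mu uR b \<Longrightarrow> gam mu uR \<le> Uf mu uR b - Uf mu uR a"
  unfolding gam_def by (rule Min_ins_le) (auto intro: image_eqI[where x="(a,b)"])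

lemma bet_pos: "\<forall>C a b. C \<noteq> {} \<longrightarrow> a \<noteq> b \<longrightarrow> (\<Sum>w\<in>C. mu w * (uR a w - uR b w)) \<noteq> 0 \<Longrightarrow> bet mu uR > 0"
  unfolding bet_def by (rule Min_ins_pos) auto

lemma bet_le: "C \<noteq> {} \<Longrightarrow> a \<noteq> b \<Longrightarrow> bet mu uR \<le> \<bar>\<Sum>w\<in>C. mu w * (uR a w - uR b w)\<bar>"
  unfolding bet_def by (rule Min_ins_le) (auto intro: image_eqI[where x="(C,a,b)"])

lemma mumin_pos: "\<forall>w. mu w > 0 \<Longrightarrow> mumin mu > 0"
  unfolding mumin_def by (subst Min_gr_iff) auto

lemma mumin_le: "mumin mu \<le> mu w"
  unfolding mumin_def by (rule Min_le) auto

context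
  fixes mu :: "'w::finite \<Rightarrow> real" and v :: "'a::finite \<Rightarrow> real" and uR :: "'a \<Rightarrow> 'w \<Rightarrow> real"
  assumes mu_d: "is_distr mu" and mu_pos: "\<forall>w. mu w > 0" and v_inj: "inj v"
    and v01: "\<forall>a. 0 \<le> v a \<and> v a \<le> 1" and u01: "\<forall>a w. 0 \<le> uR a w \<and> uR a w \<le> 1"
    and G2: "\<forall>C a b. C \<noteq> {} \<longrightarrow> a \<noteq> b \<longrightarrow> (\<Sum>w\<in>C. mu w * (uR a w - uR b w)) \<noteq> 0"
begin

lemma v1: "\<forall>a. v a \<le> 1" using v01 by simp

lemma P_upper:
  fixes \<sigma> :: "'w \<Rightarrow> 'm::finite \<Rightarrow> real"
  assumes "msg_strat \<sigma>" "act_strat \<rho>" "R_BR mu uR \<sigma> \<rho>"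
  shows "payoff mu (\<lambda>a w. v a) \<sigma> \<rho> \<le> persuasion_payoff mu (\<lambda>a w. v a) uR TYPE('m)"
  unfolding persuasion_payoff_def
proof (rule cSup_upper)
  show "payoff mu (\<lambda>a w. v a) \<sigma> \<rho> \<in> {payoff mu (\<lambda>a w. v a) \<sigma> \<rho> |(\<sigma>::'w \<Rightarrow> 'm \<Rightarrow> real) \<rho>.
            msg_strat \<sigma> \<and> act_strat \<rho> \<and> R_BR mu uR \<sigma> \<rho>}" using assms by blast
  show "bdd_above {payoff mu (\<lambda>a w. v a) \<sigma> \<rho> |(\<sigma>::'w \<Rightarrow> 'm \<Rightarrow> real) \<rho>.
            msg_strat \<sigma> \<and> act_strat \<rho> \<and> R_BR mu uR \<sigma> \<rho>}"
    by (rule bdd_aboveI[where M=1]) (auto intro: payoff_le1[OF mu_d _ _ v1])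
qed

lemma Part_upper:
  fixes \<sigma> :: "'w \<Rightarrow> 'm::finite \<Rightarrow> real"
  assumes "msg_strat \<sigma>" "partitional \<sigma>" "act_strat \<rho>" "R_BR mu uR \<sigma> \<rho>"
  shows "payoff mu (\<lambda>a w. v a) \<sigma> \<rho> \<le> partitional_persuasion_payoff mu (\<lambda>a w. v a) uR TYPE('m)"
  unfolding partitional_persuasion_payoff_def
proof (rule cSup_upper)
  show "payoff mu (\<lambda>a w. v a) \<sigma> \<rho> \<in> {payoff mu (\<lambda>a w. v a) \<sigma> \<rho> |(\<sigma>::'w \<Rightarrow> 'm \<Rightarrow> real) \<rho>.
            msg_strat \<sigma> \<and> partitional \<sigma> \<and> act_strat \<rho> \<and> R_BR mu uR \<sigma> \<rho>}" using assms by blast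
  show "bdd_above {payoff mu (\<lambda>a w. v a) \<sigma> \<rho> |(\<sigma>::'w \<Rightarrow> 'm \<Rightarrow> real) \<rho>.
            msg_strat \<sigma> \<and> partitional \<sigma> \<and> act_strat \<rho> \<and> R_BR mu uR \<sigma> \<rho>}"
    by (rule bdd_aboveI[where M=1]) (auto intro: payoff_le1[OF mu_d _ _ v1])
qed

lemma C_upper:
  fixes \<sigma> :: "'w \<Rightarrow> 'm::finite \<Rightarrow> real"
  assumes "msg_strat \<sigma>" "act_strat \<rho>" "S_BR mu (\<lambda>a w. v a) \<sigma> \<rho>" "R_BR mu uR \<sigma> \<rho>"
  shows "payoff mu (\<lambda>a w. v a) \<sigma> \<rho> \<le> cheap_talk_payoff mu (\<lambda>a w. v a) uR TYPE('m)"
  unfolding cheap_talk_payoff_def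
proof (rule cSup_upper)
  show "payoff mu (\<lambda>a w. v a) \<sigma> \<rho> \<in> {payoff mu (\<lambda>a w. v a) \<sigma> \<rho> |(\<sigma>::'w \<Rightarrow> 'm \<Rightarrow> real) \<rho>.
            msg_strat \<sigma> \<and> act_strat \<rho> \<and> S_BR mu (\<lambda>a w. v a) \<sigma> \<rho> \<and> R_BR mu uR \<sigma> \<rho>}" using assms by blast
  show "bdd_above {payoff mu (\<lambda>a w. v a) \<sigma> \<rho> |(\<sigma>::'w \<Rightarrow> 'm \<Rightarrow> real) \<rho>.
            msg_strat \<sigma> \<and> act_strat \<rho> \<and> S_BR mu (\<lambda>a w. v a) \<sigma> \<rho> \<and> R_BR mu uR \<sigma> \<rho>}"
    by (rule bdd_aboveI[where M=1]) (auto intro: payoff_le1[OF mu_d _ _ v1])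
qed

lemma babble_here:
  obtains a0 where "\<forall>b. (\<Sum>w\<in>UNIV. mu w * uR b w) \<le> (\<Sum>w\<in>UNIV. mu w * uR a0 w)"
  using ex_max[of "\<lambda>b. (\<Sum>w\<in>UNIV. mu w * uR b w)"] by blast

lemma C_least:
  assumes "\<And>(\<sigma>::'w \<Rightarrow> 'm::finite \<Rightarrow> real) \<rho>. msg_strat \<sigma> \<Longrightarrow> act_strat \<rho> \<Longrightarrow> S_BR mu (\<lambda>a w. v a) \<sigma> \<rho>
     \<Longrightarrow> R_BR mu uR \<sigma> \<rho> \<Longrightarrow> payoff mu (\<lambda>a w. v a) \<sigma> \<rho> \<le> B"
  shows "cheap_talk_payoff mu (\<lambda>a w. v a) uR TYPE('m) \<le> B"
  unfolding cheap_talk_payoff_def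
proof (rule cSup_least)
  obtain a0 where a0: "\<forall>b. (\<Sum>w\<in>UNIV. mu w * uR b w) \<le> (\<Sum>w\<in>UNIV. mu w * uR a0 w)"
    by (rule babble_here)
  note bb = babble[OF mu_d a0, of "undefined::'m" v]
  show "{payoff mu (\<lambda>a w. v a) \<sigma> \<rho> |(\<sigma>::'w \<Rightarrow> 'm \<Rightarrow> real) \<rho>.
            msg_strat \<sigma> \<and> act_strat \<rho> \<and> S_BR mu (\<lambda>a w. v a) \<sigma> \<rho> \<and> R_BR mu uR \<sigma> \<rho>} \<noteq> {}"
    using bb by blast
  show "\<And>x. x \<in> {payoff mu (\<lambda>a w. v a) \<sigma> \<rho> |(\<sigma>::'w \<Rightarrow> 'm \<Rightarrow> real) \<rho>.
            msg_strat \<sigma> \<and> act_strat \<rho> \<and> S_BR mu (\<lambda>a w. v a) \<sigma> \<rho> \<and> R_BR mu uR \<sigma> \<rho>} \<Longrightarrow> x \<le> B"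
    using assms by blast
qed

lemma Part_least:
  assumes "\<And>(\<sigma>::'w \<Rightarrow> 'm::finite \<Rightarrow> real) \<rho>. msg_strat \<sigma> \<Longrightarrow> partitional \<sigma> \<Longrightarrow> act_strat \<rho>
     \<Longrightarrow> R_BR mu uR \<sigma> \<rho> \<Longrightarrow> payoff mu (\<lambda>a w. v a) \<sigma> \<rho> \<le> B"
  shows "partitional_persuasion_payoff mu (\<lambda>a w. v a) uR TYPE('m) \<le> B"
  unfolding partitional_persuasion_payoff_def
proof (rule cSup_least)
  obtain a0 where a0: "\<forall>b. (\<Sum>w\<in>UNIV. mu w * uR b w) \<le> (\<Sum>w\<in>UNIV. mu w * uR a0 w)"
    by (rule babble_here)
  note bb = babble[OF mu_d a0, of "undefined::'m" v]
  show "{payoff mu (\<lambda>a w. v a) \<sigma> \<rho> |(\<sigma>::'w \<Rightarrow> 'm \<Rightarrow> real) \<rho>.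
            msg_strat \<sigma> \<and> partitional \<sigma> \<and> act_strat \<rho> \<and> R_BR mu uR \<sigma> \<rho>} \<noteq> {}"
    using bb by blast
  show "\<And>x. x \<in> {payoff mu (\<lambda>a w. v a) \<sigma> \<rho> |(\<sigma>::'w \<Rightarrow> 'm \<Rightarrow> real) \<rho>.
            msg_strat \<sigma> \<and> partitional \<sigma> \<and> act_strat \<rho> \<and> R_BR mu uR \<sigma> \<rho>} \<Longrightarrow> x \<le> B"
    using assms by blast
qed

lemma dir1:
  fixes \<sigma> :: "'w \<Rightarrow> 'm::finite \<Rightarrow> real" and \<rho> :: "'m \<Rightarrow> 'a \<Rightarrow> real"
  assumes ms: "msg_strat \<sigma>" and act: "act_strat \<rho>" and S: "S_BR mu (\<lambda>a w. v a) \<sigma> \<rho>"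
    and R: "R_BR mu uR \<sigma> \<rho>"
  shows "payoff mu (\<lambda>a w. v a) \<sigma> \<rho> \<le> max (partitional_persuasion_payoff mu (\<lambda>a w. v a) uR TYPE('m))
           (persuasion_payoff mu (\<lambda>a w. v a) uR TYPE('m) - Dv v * gam mu uR)"
proof -
  let ?g = "gR mu uR \<sigma>"
  let ?P = "persuasion_payoff mu (\<lambda>a w. v a) uR TYPE('m)"
  let ?Part = "partitional_persuasion_payoff mu (\<lambda>a w. v a) uR TYPE('m)"
  define c where "c = payoff mu (\<lambda>a w. v a) \<sigma> \<rho>"
  obtain am where am: "\<forall>m. (\<forall>b. ?g m b \<le> ?g m (am m)) \<and> (\<forall>a. (\<forall>b. ?g m b \<le> ?g m a) \<longrightarrow> v a \<le> v (am m))"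
    using best_resp[of ?g v] by blast
  have Vle: "Vv v \<rho> m \<le> v (am m)" for m
    by (rule V_le_best[OF R act]) (use am in blast)
  define \<rho>p where "\<rho>p = (\<lambda>m a. if a = am m then 1 else (0::real))"
  have Rp: "R_BR mu uR \<sigma> \<rho>p" unfolding \<rho>p_def by (rule RB_pure) (use am in blast)
  have actp: "act_strat \<rho>p" unfolding \<rho>p_def by (rule pure_act)
  have payp: "payoff mu (\<lambda>a w. v a) \<sigma> \<rho>p = (\<Sum>m\<in>UNIV. pim mu \<sigma> m * v (am m))"
    unfolding payoff_T2 \<rho>p_def Vv_pure by simp
  have Pp: "(\<Sum>m\<in>UNIV. pim mu \<sigma> m * v (am m)) \<le> ?P"
    using P_upper[OF ms actp Rp] payp by simp
  define Used where "Used = {m. pim mu \<sigma> m > 0}"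
  have Une: "Used \<noteq> {}"
  proof
    assume "Used = {}"
    then have "\<not> pim mu \<sigma> m > 0" for m unfolding Used_def by auto
    then have "pim mu \<sigma> m \<le> 0" for m by (simp add: not_less)
    then have "(\<Sum>m\<in>UNIV. pim mu \<sigma> m) \<le> 0" by (simp add: sum_nonpos)
    then show False using sum_pim[OF mu_d ms] by simp
  qed
  obtain mst where mst: "mst \<in> Used" "\<forall>m\<in>Used. v (am mst) \<le> v (am m)"
    using ex_min_on[of Used "\<lambda>m. v (am m)"] Une by auto
  define astar where "astar = am mst"
  have c_le: "c \<le> v astar"
  proof -
    obtain w where "\<sigma> w mst > 0" using mst(1) pim_pos[OF mu_d mu_pos ms] unfolding Used_def by blast
    then have "Vv v \<rho> mst = c" unfolding c_def by (rule SB_used[OF mu_d mu_pos ms S])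
    then show ?thesis using Vle[of mst] astar_def by simp
  qed
  define ph where "ph = (\<Sum>m\<in>UNIV. if am m \<noteq> astar then pim mu \<sigma> m else 0)"
  have ph_nn: "ph \<ge> 0" unfolding ph_def using pim_nonneg[OF mu_d ms] by (simp add: sum_nonneg)
  have claimA: "v astar + Dv v * ph \<le> (\<Sum>m\<in>UNIV. pim mu \<sigma> m * v (am m))"
  proof -
    have "v astar + Dv v * ph = (\<Sum>m\<in>UNIV. pim mu \<sigma> m * v astar + (if am m \<noteq> astar then Dv v * pim mu \<sigma> m else 0))"
    proof -
      have e1: "(\<Sum>m\<in>UNIV. pim mu \<sigma> m * v astar) = v astar"
        using sum_pim[OF mu_d ms] by (simp add: sum_distrib_right[symmetric])
      have e2: "Dv v * ph = (\<Sum>m\<in>UNIV. if am m \<noteq> astar then Dv v * pim mu \<sigma> m else 0)"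
        unfolding ph_def sum_distrib_left by (rule sum.cong) auto
      show ?thesis unfolding sum.distrib e1 e2 ..
    qed
    also have "\<dots> \<le> (\<Sum>m\<in>UNIV. pim mu \<sigma> m * v (am m))"
    proof (rule sum_mono)
      fix m
      have pn: "pim mu \<sigma> m \<ge> 0" by (rule pim_nonneg[OF mu_d ms])
      show "pim mu \<sigma> m * v astar + (if am m \<noteq> astar then Dv v * pim mu \<sigma> m else 0) \<le> pim mu \<sigma> m * v (am m)"
      proof (cases "pim mu \<sigma> m > 0")
        case False
        then have "pim mu \<sigma> m = 0" using pn by linarith
        then show ?thesis by simp
      next
        case True
        then have mU: "m \<in> Used" unfolding Used_def by simp
        then have ge: "v astar \<le> v (am m)" using mst(2) astar_def by simp
        show ?thesis
        proof (cases "am m = astar")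
          case True then show ?thesis by simp
        next
          case False
          have "Dv v \<le> \<bar>v (am m) - v astar\<bar>" using False by (rule Dv_le)
          also have "\<dots> = v (am m) - v astar" using ge by simp
          finally have "v astar + Dv v \<le> v (am m)" by simp
          then have "pim mu \<sigma> m * (v astar + Dv v) \<le> pim mu \<sigma> m * v (am m)"
            using pn by (rule mult_left_mono)
          then show ?thesis using False by (simp add: algebra_simps)
        qed
      qed
    qed
    finally show ?thesis .
  qed
  have claimB: "Uf mu uR astar - Uf mu uR b \<ge> - ph" for b
  proof -
    have "Uf mu uR astar - Uf mu uR b = (\<Sum>m\<in>UNIV. ?g m astar - ?g m b)"
      unfolding Uf_def using U_sum[OF ms, of mu uR] by (simp add: sum_subtractf)
    also have "\<dots> \<ge> (\<Sum>m\<in>UNIV. if am m \<noteq> astar then - pim mu \<sigma> m else 0)"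
    proof (rule sum_mono)
      fix m
      show "(if am m \<noteq> astar then - pim mu \<sigma> m else 0) \<le> ?g m astar - ?g m b"
      proof (cases "am m = astar")
        case True
        then have "?g m b \<le> ?g m astar" using am by metis
        then show ?thesis using True by simp
      next
        case False
        then show ?thesis using g_diff[OF mu_d ms u01, of m astar b] by simp
      qed
    qed
    also have "(\<Sum>m\<in>UNIV. if am m \<noteq> astar then - pim mu \<sigma> m else 0) = - ph"
      unfolding ph_def sum_negf[symmetric] by (rule sum.cong) auto
    finally show ?thesis .
  qed
  show ?thesis
  proof (cases "ph < gam mu uR")
    case True
    have best: "\<forall>b. Uf mu uR b \<le> Uf mu uR astar"
    proof (rule ccontr)
      assume "\<not> (\<forall>b. Uf mu uR b \<le> Uf mu uR astar)"
      then obtain b where "Uf mu uR astar < Uf mu uR b" by (auto simp: not_le)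
      then have "gam mu uR \<le> Uf mu uR b - Uf mu uR astar" by (rule gam_le)
      then show False using claimB[of b] True by linarith
    qed
    then have best': "\<forall>b. (\<Sum>w\<in>UNIV. mu w * uR b w) \<le> (\<Sum>w\<in>UNIV. mu w * uR astar w)"
      unfolding Uf_def by simp
    note bb = babble[OF mu_d best', of mst v]
    have "v astar \<le> ?Part"
      using Part_upper[of "\<lambda>w m. if m = mst then 1 else 0" "\<lambda>m a. if a = astar then 1 else 0"] bb by simp
    then show ?thesis using c_le c_def by simp
  next
    case False
    have "c + Dv v * ph \<le> ?P" using c_le claimA Pp by simp
    moreover have "Dv v * gam mu uR \<le> Dv v * ph"
      using False Dv_pos[OF v_inj] by (simp add: mult_left_mono)
    ultimately show ?thesis unfolding c_def by simp
  qed
qed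

lemma dir2:
  fixes \<sigma> :: "'w \<Rightarrow> 'm::finite \<Rightarrow> real" and \<rho> :: "'m \<Rightarrow> 'a \<Rightarrow> real"
  assumes ms: "msg_strat \<sigma>" and part: "partitional \<sigma>" and act: "act_strat \<rho>"
    and R: "R_BR mu uR \<sigma> \<rho>"
  shows "payoff mu (\<lambda>a w. v a) \<sigma> \<rho> \<le> max (cheap_talk_payoff mu (\<lambda>a w. v a) uR TYPE('m))
           (persuasion_payoff mu (\<lambda>a w. v a) uR TYPE('m) - min (1/2) (bet mu uR / 2) * Dv v * mumin mu)"
proof -
  let ?g = "gR mu uR \<sigma>"
  let ?P = "persuasion_payoff mu (\<lambda>a w. v a) uR TYPE('m)"
  let ?C = "cheap_talk_payoff mu (\<lambda>a w. v a) uR TYPE('m)"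
  define t0 where "t0 = min (1/2) (bet mu uR / 2)"
  have bpos: "bet mu uR > 0" by (rule bet_pos[OF G2])
  have t0pos: "t0 > 0" and t0h: "t0 \<le> 1/2" and t0b: "t0 \<le> bet mu uR / 2"
    unfolding t0_def using bpos by auto
  define f where "f = (\<lambda>w. SOME m. \<sigma> w m = 1)"
  have sp: "\<sigma> w m = (if m = f w then 1 else 0)" for w m
    unfolding f_def by (rule part_pure[OF ms part])
  have gcell: "?g m a = (\<Sum>w\<in>{w. f w = m}. mu w * uR a w)" for m a
  proof -
    have "?g m a = (\<Sum>w\<in>UNIV. if f w = m then mu w * uR a w else 0)"
      unfolding gR_def sp by (rule sum.cong) auto
    also have "\<dots> = (\<Sum>w\<in>{w. f w = m}. mu w * uR a w)"
      by (simp add: sum.If_cases)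
    finally show ?thesis .
  qed
  obtain am where am: "\<forall>m. (\<forall>b. ?g m b \<le> ?g m (am m)) \<and> (\<forall>a. (\<forall>b. ?g m b \<le> ?g m a) \<longrightarrow> v a \<le> v (am m))"
    using best_resp[of ?g v] by blast
  have Vle: "Vv v \<rho> m \<le> v (am m)" for m
    by (rule V_le_best[OF R act]) (use am in blast)
  define p' where "p' = (\<Sum>w\<in>UNIV. mu w * v (am (f w)))"
  have inner: "(\<Sum>m\<in>UNIV. \<sigma> w m * h m) = h (f w)" for w and h :: "'m \<Rightarrow> real"
    unfolding sp by (rule pure_sum)
  have pp: "payoff mu (\<lambda>a w. v a) \<sigma> \<rho> \<le> p'"
    unfolding payoff_T1 inner p'_def
  proof (rule sum_mono)
    fix w show "mu w * Vv v \<rho> (f w) \<le> mu w * v (am (f w))"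
      using Vle[of "f w"] mu_pos by (simp add: less_imp_le mult_left_mono)
  qed
  show ?thesis
  proof (cases "\<exists>w1 w2. v (am (f w1)) > v (am (f w2))")
    case True
    then obtain w1 w2 where w12: "v (am (f w1)) > v (am (f w2))" by blast
    define m1 where "m1 = f w1"
    define m2 where "m2 = f w2"
    have m12: "m1 \<noteq> m2" using w12 m1_def m2_def by auto
    have a12: "am m1 \<noteq> am m2" using w12 m1_def m2_def by auto
    have margin: "?g m1 (am m1) - ?g m1 b \<ge> bet mu uR" if "b \<noteq> am m1" for b
    proof -
      have "?g m1 (am m1) - ?g m1 b = (\<Sum>w\<in>{w. f w = m1}. mu w * (uR (am m1) w - uR b w))"
        unfolding gcell by (simp add: sum_subtractf algebra_simps)
      moreover have "{w. f w = m1} \<noteq> {}" using m1_def by auto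
      ultimately have "bet mu uR \<le> \<bar>?g m1 (am m1) - ?g m1 b\<bar>"
        using bet_le[of "{w. f w = m1}" "am m1" b mu uR] that by simp
      moreover have "?g m1 b \<le> ?g m1 (am m1)" using am by blast
      ultimately show ?thesis by simp
    qed
    define \<sigma>t where "\<sigma>t = (\<lambda>w m. \<sigma> w m + t0 * (if f w = m2 then 1 else 0) *
        ((if m = m1 then 1 else 0) - (if m = m2 then 1 else 0)))"
    have mst: "msg_strat \<sigma>t" unfolding msg_strat_def is_distr_def
    proof (intro allI conjI)
      fix w m
      show "0 \<le> \<sigma>t w m" unfolding \<sigma>t_def sp using t0pos t0h m12 by auto
    next
      fix w
      have "sum (\<sigma>t w) UNIV = sum (\<sigma> w) UNIV + t0 * (if f w = m2 then 1 else 0) *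
          ((\<Sum>m\<in>UNIV. if m = m1 then 1 else 0) - (\<Sum>m\<in>UNIV. if m = m2 then 1 else 0))"
      proof -
        have "sum (\<sigma>t w) UNIV = sum (\<sigma> w) UNIV + (\<Sum>m\<in>UNIV. t0 * (if f w = m2 then 1 else 0) *
          ((if m = m1 then 1 else 0) - (if m = m2 then 1 else 0)))"
          unfolding \<sigma>t_def by (rule sum.distrib)
        also have "(\<Sum>m\<in>UNIV. t0 * (if f w = m2 then 1 else 0) *
          ((if m = m1 then 1 else 0) - (if m = m2 then 1 else 0))) = t0 * (if f w = m2 then 1 else 0) *
          ((\<Sum>m\<in>UNIV. if m = m1 then 1 else 0) - (\<Sum>m\<in>UNIV. if m = m2 then 1 else 0))"
          by (simp only: sum_subtractf[symmetric] sum_distrib_left)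
        finally show ?thesis .
      qed
      also have "\<dots> = 1" using ms unfolding msg_strat_def is_distr_def by simp
      finally show "sum (\<sigma>t w) UNIV = 1" .
    qed
    define ind where "ind = (\<lambda>w. if f w = m2 then 1 else (0::real))"
    have g2: "?g m2 a = (\<Sum>w\<in>UNIV. mu w * ind w * uR a w)" for a
      unfolding gR_def sp ind_def by (rule sum.cong) auto
    have gt: "gR mu uR \<sigma>t m a = ?g m a + t0 * ((if m = m1 then 1 else 0) - (if m = m2 then 1 else 0)) * ?g m2 a"
      for m a
    proof -
      define dm where "dm = (if m = m1 then 1 else 0) - (if m = m2 then 1 else (0::real))"
      have st: "\<sigma>t w m = \<sigma> w m + t0 * ind w * dm" for w unfolding \<sigma>t_def ind_def dm_def by simp
      have "gR mu uR \<sigma>t m a = (\<Sum>w\<in>UNIV. mu w * \<sigma> w m * uR a w + t0 * dm * (mu w * ind w * uR a w))"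
        unfolding gR_def st by (rule sum.cong) (simp_all add: algebra_simps)
      also have "\<dots> = ?g m a + t0 * dm * (\<Sum>w\<in>UNIV. mu w * ind w * uR a w)"
        unfolding sum.distrib sum_distrib_left[symmetric] gR_def ..
      also have "\<dots> = ?g m a + t0 * dm * ?g m2 a" using g2[of a] by simp
      finally show ?thesis unfolding dm_def .
    qed
    have BRt: "gR mu uR \<sigma>t m b \<le> gR mu uR \<sigma>t m (am m)" for m b
    proof (cases "m = m1")
      case True
      show ?thesis
      proof (cases "b = am m1")
        case True then show ?thesis using \<open>m = m1\<close> by simp
      next
        case False
        have "?g m1 (am m1) - ?g m1 b \<ge> bet mu uR" using margin False by simp
        moreover have "?g m2 (am m1) - ?g m2 b \<ge> - 1"
          using g_diff[OF mu_d ms u01, of m2 "am m1" b] pim_le1[OF mu_d ms, of m2] by simp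
        ultimately have "(?g m1 (am m1) + t0 * ?g m2 (am m1)) - (?g m1 b + t0 * ?g m2 b) \<ge> bet mu uR - t0"
        proof -
          assume h1: "?g m1 (am m1) - ?g m1 b \<ge> bet mu uR" and h2: "?g m2 (am m1) - ?g m2 b \<ge> - 1"
          have "t0 * (?g m2 (am m1) - ?g m2 b) \<ge> t0 * (-1)" using mult_left_mono[OF h2, of t0] t0pos by simp
          then show ?thesis using h1 by (simp add: algebra_simps)
        qed
        then show ?thesis using True gt m12 t0b bpos by simp
      qed
    next
      case False
      note nm1 = False
      show ?thesis
      proof (cases "m = m2")
        case True
        have "?g m2 b \<le> ?g m2 (am m2)" using am by blast
        then have "(1 - t0) * ?g m2 b \<le> (1 - t0) * ?g m2 (am m2)" using t0h by (simp add: mult_left_mono)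
        moreover have "gR mu uR \<sigma>t m2 x = (1 - t0) * ?g m2 x" for x
          using gt[of m2 x] m12 by (simp add: algebra_simps)
        ultimately show ?thesis using True by simp
      next
        case False
        then show ?thesis using nm1 gt am by simp
      qed
    qed
    define \<rho>t where "\<rho>t = (\<lambda>m a. if a = am m then 1 else (0::real))"
    have Rt: "R_BR mu uR \<sigma>t \<rho>t" unfolding \<rho>t_def by (rule RB_pure) (rule BRt)
    have actt: "act_strat \<rho>t" unfolding \<rho>t_def by (rule pure_act)
    have Pt: "payoff mu (\<lambda>a w. v a) \<sigma>t \<rho>t \<le> ?P" by (rule P_upper[OF mst actt Rt])
    have inner_t: "(\<Sum>m\<in>UNIV. \<sigma>t w m * v (am m)) = v (am (f w)) + t0 * (if f w = m2 then 1 else 0) * (v (am m1) - v (am m2))" for w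
    proof -
      have "(\<Sum>m\<in>UNIV. \<sigma>t w m * v (am m)) = (\<Sum>m\<in>UNIV. \<sigma> w m * v (am m)) + t0 * (if f w = m2 then 1 else 0) *
         ((\<Sum>m\<in>UNIV. (if m = m1 then 1 else 0) * v (am m)) - (\<Sum>m\<in>UNIV. (if m = m2 then 1 else 0) * v (am m)))"
        unfolding \<sigma>t_def by (simp add: algebra_simps sum.distrib sum_distrib_left sum_subtractf)
      then show ?thesis unfolding inner pure_sum by simp
    qed
    have payt: "payoff mu (\<lambda>a w. v a) \<sigma>t \<rho>t = p' + t0 * (v (am m1) - v (am m2)) * (\<Sum>w\<in>UNIV. mu w * ind w)"
    proof -
      have "payoff mu (\<lambda>a w. v a) \<sigma>t \<rho>t = (\<Sum>w\<in>UNIV. mu w * v (am (f w)) + t0 * (v (am m1) - v (am m2)) * (mu w * ind w))"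
        unfolding payoff_T1 \<rho>t_def Vv_pure inner_t ind_def by (rule sum.cong) (simp_all add: algebra_simps)
      also have "\<dots> = p' + t0 * (v (am m1) - v (am m2)) * (\<Sum>w\<in>UNIV. mu w * ind w)"
        unfolding sum.distrib sum_distrib_left[symmetric] p'_def ..
      finally show ?thesis .
    qed
    have sm: "(\<Sum>w\<in>UNIV. mu w * ind w) \<ge> mumin mu"
    proof -
      have "mumin mu \<le> mu w2" by (rule mumin_le)
      also have "mu w2 = mu w2 * ind w2" using m2_def ind_def by simp
      also have "\<dots> \<le> (\<Sum>w\<in>UNIV. mu w * ind w)"
        by (rule member_le_sum) (use mu_pos in \<open>auto simp: less_imp_le ind_def\<close>)
      finally show ?thesis .
    qed
    have dv: "v (am m1) - v (am m2) \<ge> Dv v"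
      using Dv_le[OF a12, of v] w12 m1_def m2_def by simp
    have "t0 * Dv v * mumin mu \<le> t0 * (v (am m1) - v (am m2)) * (\<Sum>w\<in>UNIV. mu w * ind w)"
    proof -
      have dpos: "Dv v > 0" by (rule Dv_pos[OF v_inj])
      have mpos: "mumin mu > 0" by (rule mumin_pos[OF mu_pos])
      have "Dv v * mumin mu \<le> (v (am m1) - v (am m2)) * (\<Sum>w\<in>UNIV. mu w * ind w)"
        using dv sm dpos mpos by (intro mult_mono) auto
      then show ?thesis using t0pos by (simp add: mult.assoc mult_left_mono)
    qed
    then have "payoff mu (\<lambda>a w. v a) \<sigma> \<rho> \<le> ?P - t0 * Dv v * mumin mu"
      using pp payt Pt by linarith
    then show ?thesis unfolding t0_def by simp
  next
    case False
    define w0 where "w0 = (undefined :: 'w)"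
    define c0 where "c0 = v (am (f w0))"
    have allc: "v (am (f w)) = c0" for w using False c0_def by (meson not_less_iff_gr_or_eq)
    define bm where "bm = (\<lambda>m. if \<exists>w. f w = m then am m else am (f w0))"
    define \<rho>B where "\<rho>B = (\<lambda>m a. if a = bm m then 1 else (0::real))"
    have BRB: "?g m b \<le> ?g m (bm m)" for m b
    proof (cases "\<exists>w. f w = m")
      case True then show ?thesis unfolding bm_def using am by simp
    next
      case False
      then have "{w. f w = m} = {}" by auto
      then show ?thesis unfolding gcell by simp
    qed
    have RB: "R_BR mu uR \<sigma> \<rho>B" unfolding \<rho>B_def by (rule RB_pure) (rule BRB)
    have actB: "act_strat \<rho>B" unfolding \<rho>B_def by (rule pure_act)
    have VB: "Vv v \<rho>B m = c0" for m
    proof -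
      have "Vv v \<rho>B m = v (bm m)" unfolding \<rho>B_def by (rule Vv_pure)
      also have "\<dots> = c0"
      proof (cases "\<exists>w. f w = m")
        case True
        then obtain w where "f w = m" by blast
        then show ?thesis unfolding bm_def using allc[of w] by auto
      next
        case False then show ?thesis unfolding bm_def c0_def by simp
      qed
      finally show ?thesis .
    qed
    have SB: "S_BR mu (\<lambda>a w. v a) \<sigma> \<rho>B \<and> payoff mu (\<lambda>a w. v a) \<sigma> \<rho>B = c0"
      by (rule SB_const[OF mu_d ms VB])
    have "c0 \<le> ?C" using C_upper[OF ms actB SB[THEN conjunct1] RB] SB by simp
    moreover have "p' = c0" unfolding p'_def allc
      using mu_d unfolding is_distr_def by (simp add: sum_distrib_right[symmetric])
    ultimately show ?thesis using pp by simp
  qed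
qed

lemma main_equiv:
  "commitment_valuable mu (\<lambda>a w. v a) uR TYPE('m::finite) \<longleftrightarrow> values_randomization mu (\<lambda>a w. v a) uR TYPE('m)"
proof -
  let ?P = "persuasion_payoff mu (\<lambda>a w. v a) uR TYPE('m)"
  let ?C = "cheap_talk_payoff mu (\<lambda>a w. v a) uR TYPE('m)"
  let ?Part = "partitional_persuasion_payoff mu (\<lambda>a w. v a) uR TYPE('m)"
  have Cb: "?C \<le> max ?Part (?P - Dv v * gam mu uR)"
    by (rule C_least) (rule dir1)
  have Pb: "?Part \<le> max ?C (?P - min (1/2) (bet mu uR / 2) * Dv v * mumin mu)"
    by (rule Part_least) (rule dir2)
  have d1: "Dv v * gam mu uR > 0" using Dv_pos[OF v_inj] gam_pos[of mu uR] by simp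
  have d2: "min (1/2) (bet mu uR / 2) * Dv v * mumin mu > 0"
    using Dv_pos[OF v_inj] bet_pos[OF G2] mumin_pos[OF mu_pos] by simp
  show ?thesis unfolding commitment_valuable_def values_randomization_def
    using Cb Pb d1 d2 by linarith
qed

end

lemma cube_eq: "(unit_cube :: (real^'n::finite) set) = cbox 0 1"
  unfolding unit_cube_def by (auto simp: mem_box_cart)
lemma cube_meas: "emeasure lebesgue (unit_cube :: (real^'n::finite) set) = 1"
proof -
  have "emeasure lebesgue (cbox 0 (1::real^'n)) = emeasure lborel (cbox 0 (1::real^'n))"
    by (simp add: main_part_sets)
  also have "\<dots> = ennreal (Henstock_Kurzweil_Integration.content (cbox 0 (1::real^'n)))"
    by (simp add: emeasure_lborel_cbox_eq content_cbox_if interval_eq_empty_cart Basis_vec_def inner_axis)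
  also have "Henstock_Kurzweil_Integration.content (cbox 0 (1::real^'n)) = 1"
    by (subst content_cbox_cart) (auto simp: interval_eq_empty_cart)
  finally show ?thesis by (simp add: cube_eq)
qed

definition genericE :: "('w::finite \<Rightarrow> real) \<Rightarrow> real ^ ('a::finite + ('a \<times> 'w)) \<Rightarrow> bool" where
  "genericE mu e \<longleftrightarrow> (\<forall>a b. a \<noteq> b \<longrightarrow> e$Inl a \<noteq> e$Inl b) \<and>
     (\<forall>C a b. C \<noteq> {} \<longrightarrow> a \<noteq> b \<longrightarrow> (\<Sum>w\<in>C. mu w * (e$Inr(a,w) - e$Inr(b,w))) \<noteq> 0)"

lemma negl_hyp: "(c::real^'n::finite) \<noteq> 0 \<Longrightarrow> negligible {x. c \<bullet> x = 0}"
  using negligible_hyperplane by blast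

lemma generic_measure:
  fixes mu :: "'w::finite \<Rightarrow> real"
  assumes pos: "\<forall>w. mu w > 0"
  shows "\<exists>E \<subseteq> (unit_cube :: (real ^ ('a::finite + ('a \<times> 'w))) set).
           E \<in> sets lebesgue \<and> emeasure lebesgue E = 1 \<and> (\<forall>e\<in>E. genericE mu e)"
proof -
  define c1 :: "'a \<times> 'a \<Rightarrow> real ^ ('a + ('a \<times> 'w))" where
    "c1 p = axis (Inl (fst p)) 1 - axis (Inl (snd p)) 1" for p
  define c2 :: "'w set \<times> 'a \<times> 'a \<Rightarrow> real ^ ('a + ('a \<times> 'w))" where
    "c2 q = (\<Sum>w\<in>fst q. mu w *\<^sub>R (axis (Inr (fst (snd q), w)) 1 - axis (Inr (snd (snd q), w)) 1))" for q
  define H where "H = (\<lambda>c. {x::real ^ ('a + ('a \<times> 'w)). c \<bullet> x = 0})"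
  define N where "N = (H ` c1 ` {p. fst p \<noteq> snd p}) \<union> (H ` c2 ` {q. fst q \<noteq> {} \<and> fst (snd q) \<noteq> snd (snd q)})"
  have i1: "c1 p \<bullet> x = x $ Inl (fst p) - x $ Inl (snd p)" for p x
    by (simp add: c1_def inner_diff_left inner_axis')
  have i2: "c2 q \<bullet> x = (\<Sum>w\<in>fst q. mu w * (x$Inr(fst (snd q),w) - x$Inr(snd (snd q),w)))" for q x
    by (simp add: c2_def inner_sum_left inner_diff_left inner_axis' algebra_simps sum_subtractf)
  have n1: "c1 p \<noteq> 0" if "fst p \<noteq> snd p" for p
  proof
    assume "c1 p = 0"
    then have "c1 p $ Inl (fst p) = 0" by simp
    then show False using that by (simp add: c1_def axis_def)
  qed
  have n2: "c2 q \<noteq> 0" if ne: "fst q \<noteq> {}" and ab: "fst (snd q) \<noteq> snd (snd q)" for q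
  proof
    assume "c2 q = 0"
    then have 0: "c2 q $ Inr (fst (snd q), w) = 0" for w by simp
    obtain w0 where w0: "w0 \<in> fst q" using ne by blast
    have "c2 q $ Inr (fst (snd q), w0) = (\<Sum>w\<in>fst q. mu w * (if w0 = w then 1 else 0))"
      using ab by (simp add: c2_def axis_def sum_component)
    also have "\<dots> = mu w0" using w0 by (simp add: if_distrib sum.delta cong: if_cong)
    finally show False using 0[of w0] pos by (metis less_irrefl)
  qed
  have negN: "negligible (\<Union>N)"
  proof (rule negligible_Union)
    show "finite N" unfolding N_def by simp
  next
    fix T assume "T \<in> N"
    then consider p where "fst p \<noteq> snd p" "T = H (c1 p)"
      | q where "fst q \<noteq> {}" "fst (snd q) \<noteq> snd (snd q)" "T = H (c2 q)"
      unfolding N_def by blast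
    then show "negligible T"
    proof cases
      case 1 then show ?thesis unfolding H_def using negl_hyp[OF n1[OF 1(1)]] by simp
    next
      case 2 then show ?thesis unfolding H_def using negl_hyp[OF n2[OF 2(1,2)]] by simp
    qed
  qed
  define E where "E = unit_cube - \<Union>N"
  have nullN: "\<Union>N \<in> null_sets lebesgue" using negN negligible_iff_null_sets by blast
  have cubeS: "(unit_cube :: (real ^ ('a + ('a \<times> 'w))) set) \<in> sets lebesgue"
    unfolding cube_eq by simp
  have "E \<in> sets lebesgue" unfolding E_def using nullN cubeS by auto
  moreover have "emeasure lebesgue E = 1"
    unfolding E_def using emeasure_Diff_null_set[OF nullN cubeS] cube_meas by simp
  moreover have "genericE mu e" if "e \<in> E" for e
  proof -
    have "e \<notin> \<Union>N" using that E_def by auto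
    then have h1: "c1 p \<bullet> e \<noteq> 0" if "fst p \<noteq> snd p" for p
      using that unfolding N_def H_def by blast
    from \<open>e \<notin> \<Union>N\<close> have h2: "c2 q \<bullet> e \<noteq> 0" if "fst q \<noteq> {}" "fst (snd q) \<noteq> snd (snd q)" for q
      using that unfolding N_def H_def by blast
    show ?thesis unfolding genericE_def
    proof (intro conjI allI impI)
      fix a b :: 'a assume "a \<noteq> b" then show "e $ Inl a \<noteq> e $ Inl b" using h1[of "(a,b)"] i1 by simp
    next
      fix C :: "'w set" and a b :: 'a assume "C \<noteq> {}" "a \<noteq> b"
      then show "(\<Sum>w\<in>C. mu w * (e $ Inr (a, w) - e $ Inr (b, w))) \<noteq> 0"
        using h2[of "(C,a,b)"] i2 by simp
    qed
  qed
  ultimately show ?thesis unfolding E_def by blast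
qed

theorem theorem4:
  fixes mu :: "'w::finite \<Rightarrow> real"
  assumes prior: "is_distr mu" and full_support: "\<forall>w. mu w > 0"
    and msgs: "CARD('m::finite) > max CARD('w) CARD('a::finite)"
  shows "\<exists>E \<subseteq> (unit_cube :: (real ^ ('a + ('a \<times> 'w))) set).
           E \<in> sets lebesgue \<and> emeasure lebesgue E = 1 \<and>
           (\<forall>e\<in>E. commitment_valuable mu (env_uS e) (env_uR e) TYPE('m)
                    \<longleftrightarrow> values_randomization mu (env_uS e) (env_uR e) TYPE('m))"
proof -
  obtain E where E: "E \<subseteq> (unit_cube :: (real ^ ('a + ('a \<times> 'w))) set)" "E \<in> sets lebesgue"
    "emeasure lebesgue E = 1" "\<forall>e\<in>E. genericE mu e"
    using generic_measure[OF full_support] by blast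
  have "commitment_valuable mu (env_uS e) (env_uR e) TYPE('m)
          \<longleftrightarrow> values_randomization mu (env_uS e) (env_uR e) TYPE('m)" if eE: "e \<in> E" for e
  proof -
    define v where "v = (\<lambda>a. e $ Inl a)"
    have uS: "env_uS e = (\<lambda>a w. v a)" unfolding v_def by (rule ext, rule ext, simp add: env_uS_def)
    have gen: "genericE mu e" using E(4) eE by blast
    have cube: "\<forall>i. 0 \<le> e $ i \<and> e $ i \<le> 1" using E(1) eE unfolding unit_cube_def by blast
    have vinj: "inj v" unfolding inj_def v_def using gen unfolding genericE_def by blast
    have v01: "\<forall>a. 0 \<le> v a \<and> v a \<le> 1" unfolding v_def using cube by blast
    have u01: "\<forall>a w. 0 \<le> env_uR e a w \<and> env_uR e a w \<le> 1" unfolding env_uR_def using cube by blast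
    have G2: "\<forall>C a b. C \<noteq> {} \<longrightarrow> a \<noteq> b \<longrightarrow> (\<Sum>w\<in>C. mu w * (env_uR e a w - env_uR e b w)) \<noteq> 0"
      unfolding env_uR_def using gen unfolding genericE_def by blast
    show ?thesis unfolding uS by (rule main_equiv[OF prior full_support vinj v01 u01 G2])
  qed
  then show ?thesis using E by blast
qed

end
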